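(* Let $\alpha\in(0,1)$. Assume the setting described in the context, and assume there exist $\varepsilon_{\mathrm{test}}\in(0,1)$, $\{\varepsilon_{\mathrm{test}}(i)\}_{i\in I_{\mathrm{test}}}\subset(0,1)$ and $\delta_{\mathrm{test}}\in(0,1)$ such that for every measurable $q:(\mathcal{X}\times\mathcal{Y})^{n_{\mathrm{train}}}\to\mathbb{R}$ and every $i\in I_{\mathrm{test}}$, \[\left|\mathbb{P}[\widehat{s}_{\mathrm{train}}(X_i,Y_i)\le q_{\mathrm{train}}]-\mathbb{E}[P_{q,\mathrm{train}}]\right|\le\varepsilon_{\mathrm{test}}(i),\] and moreover \[\mathbb{P}\left[\left|\frac{1}{n_{\mathrm{test}}}\sum_{i\in I_{\mathrm{test}}}\mathbf{1}\{\widehat{s}_{\mathrm{train}}(X_i,Y_i)\le q_{\mathrm{train}}\}-P_{q,\mathrm{train}}\right|\le\varepsilon_{\mathrm{test}}\right]\ge 1-\delta_{\mathrm{test}}.\] Then for all $i\in I_{\mathrm{test}}$, \[\mathbb{P}\left[\widehat{s}_{\mathrm{train}}(X_i,Y_i)\le\widehat{q}^{(i)}_{1-\alpha,\mathrm{cal}}\right]\ge 1-\alpha-\varepsilon_{\mathrm{test}}(i)-\varepsilon_{\mathrm{test}}-\delta_{\mathrm{test}}-\frac{1}{n_{\mathrm{test}}}.\] Moreover, \[\mathbb{P}\left[\frac{1}{n_{\mathrm{test}}}\sum_{i\in I_{\mathrm{test}}}\mathbf{1}\{\widehat{s}_{\mathrm{train}}(X_i,Y_i)\le\widehat{q}^{(i)}_{1-\alpha,\mathrm{cal}}\}\ge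 1-\alpha-\varepsilon_{\mathrm{test}}-\frac{1}{n_{\mathrm{test}}}\right]\ge 1-2\delta_{\mathrm{test}}.\]
   Context: (Rank-one-out conformal prediction.) Let $\mathcal{X},\mathcal{Y}$ be measurable spaces. The sample $(X_i,Y_i)_{i=1}^n$ consists of random pairs in $\mathcal{X}\times\mathcal{Y}$, and $(X_*,Y_* )$ is an additional random pair, independent of the sample, with $(X_i,Y_i)\sim(X_*,Y_* )$ for all $i$. Write $n=n_{\mathrm{train}}+n_{\mathrm{test}}$ with positive integers, $n_{\mathrm{test}}\ge2$, $I_{\mathrm{train}}=\{1,\dots,n_{\mathrm{train}}\}$, $I_{\mathrm{test}}=\{n_{\mathrm{train}}+1,\dots,n\}$. Let $s:(\mathcal{X}\times\mathcal{Y})^{n_{\mathrm{train}}+1}\to\mathbb{R}$ be any (measurable) function and $\widehat{s}_{\mathrm{train}}(x,y)=s((X_i,Y_i)_{i\in I_{\mathrm{train}}},(x,y))$. For $i\in I_{\mathrm{test}}$ and $\phi\in[0,1)$, $\widehat{q}^{(i)}_{\phi,\mathrm{cal}}=\inf\{t\in\mathbb{R}:\frac{1}{n_{\mathrm{test}}-1}\sum_{j\in I_{\mathrm{test}}\setminus\{i\}}\mathbf{1}\{\widehat{s}_{\mathrm{train}}(X_j,Y_j)\le t\}\ge\phi\}$. For measurable $q:(\mathcal{X}\times\mathcal{Y})^{n_{\mathrm{train}}}\to\mathbb{R}$, $q_{\mathrm{train}}=q((X_i,Y_i)_{i\in I_{\mathrm{train}}})$ and $P_{q,\mathrm{train}}=\mathbb{P}[\widehat{s}_{\mathrm{train}}(X_*,Y_*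 )\le q_{\mathrm{train}}\mid (X_i,Y_i)_{i\in I_{\mathrm{train}}}]$. *)

theory Defs
  imports "HOL-Probability.Probability"
begin

definition train_data ::
  "(nat \<Rightarrow> 'a \<Rightarrow> 'x) \<Rightarrow> (nat \<Rightarrow> 'a \<Rightarrow> 'y) \<Rightarrow> nat \<Rightarrow> 'a \<Rightarrow> (nat \<Rightarrow> 'x \<times> 'y)" where
  "train_data X Y ntrain \<omega> = (\<lambda>i\<in>{1..ntrain}. (X i \<omega>, Y i \<omega>))"

definition cal_quantile ::
  "('z \<Rightarrow> real) \<Rightarrow> nat set \<Rightarrow> nat \<Rightarrow> (nat \<Rightarrow> 'z) \<Rightarrow> real \<Rightarrow> real" where
  "cal_quantile shat Itest i Z \<phi> =
     Inf {t::real. (\<Sum>j\<in>Itest - {i}. (of_bool (shat (Z j) \<le> t) :: real)) / (real (card Itest) - 1) \<ge> \<phi>}"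

definition P_q_train ::
  "'a measure \<Rightarrow> 'x measure \<Rightarrow> 'y measure \<Rightarrow> (nat \<Rightarrow> 'a \<Rightarrow> 'x) \<Rightarrow> (nat \<Rightarrow> 'a \<Rightarrow> 'y) \<Rightarrow>
   ('a \<Rightarrow> 'x) \<Rightarrow> ('a \<Rightarrow> 'y) \<Rightarrow> nat \<Rightarrow>
   ((nat \<Rightarrow> 'x \<times> 'y) \<Rightarrow> 'x \<times> 'y \<Rightarrow> real) \<Rightarrow> ((nat \<Rightarrow> 'x \<times> 'y) \<Rightarrow> real) \<Rightarrow> 'a \<Rightarrow> real" where
  "P_q_train M MX MY X Y Xs Ys ntrain s q =
     real_cond_exp M
       (vimage_algebra (space M) (train_data X Y ntrain) (PiM {1..ntrain} (\<lambda>_. MX \<Otimes>\<^sub>M MY)))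
       (indicator {\<omega> \<in> space M. s (train_data X Y ntrain \<omega>) (Xs \<omega>, Ys \<omega>) \<le> q (train_data X Y ntrain \<omega>)})"

end

theory Submission
  imports Defs
begin

lemma calq_char:
  fixes a :: "nat \<Rightarrow> real" and J :: "nat set"
  assumes J: "finite J" and K: "K > 0" and phi: "0 < \<phi>" and c: "\<phi> * K \<le> real (card J)"
  shows "x \<le> Inf {t::real. (\<Sum>j\<in>J. (of_bool (a j \<le> t) :: real)) / K \<ge> \<phi>}
     \<longleftrightarrow> (\<Sum>j\<in>J. (of_bool (a j < x) :: real)) < \<phi> * K"
proof -
  define T where "T = {t::real. (\<Sum>j\<in>J. (of_bool (a j \<le> t) :: real)) / K \<ge> \<phi>}"
  have Tiff: "t \<in> T \<longleftrightarrow> \<phi> * K \<le> (\<Sum>j\<in>J. (of_bool (a j \<le> t) :: real))" for t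
    using K by (simp add: T_def pos_le_divide_eq)
  have Jne: "J \<noteq> {}" using c phi K by (metis card.empty mult_pos_pos not_le of_nat_0)
  have cnt_le: "(\<Sum>j\<in>J. (of_bool (a j \<le> t) :: real)) \<le> (\<Sum>j\<in>J. (of_bool (a j < x) :: real))" if "t < x" for t
    using that by (intro sum_mono) auto
  have Tne: "Max (a ` J) \<in> T"
  proof -
    have "(\<Sum>j\<in>J. (of_bool (a j \<le> Max (a ` J)) :: real)) = real (card J)"
      using J by (simp add: Int_absorb2 subsetI)
    then show ?thesis using Tiff c by simp
  qed
  have bdd: "bdd_below T"
  proof (rule bdd_belowI[of _ "Min (a ` J)"])
    fix t assume "t \<in> T"
    then have "0 < (\<Sum>j\<in>J. (of_bool (a j \<le> t) :: real))" using Tiff phi K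
      by (meson dual_order.strict_trans1 mult_pos_pos)
    then obtain j where "j \<in> J" "a j \<le> t"
      using J by (auto simp: Int_def dest!: card_gt_0_iff[THEN iffD1])
    then show "Min (a ` J) \<le> t" using J by (meson Min_le finite_imageI image_eqI order_trans)
  qed
  show ?thesis unfolding T_def[symmetric]
  proof
    assume x: "x \<le> Inf T"
    show "(\<Sum>j\<in>J. (of_bool (a j < x) :: real)) < \<phi> * K"
    proof (rule ccontr)
      assume "\<not> ?thesis"
      then have ge: "\<phi> * K \<le> (\<Sum>j\<in>J. (of_bool (a j < x) :: real))" by simp
      define W where "W = {j\<in>J. a j < x}"
      have "0 < (\<Sum>j\<in>J. (of_bool (a j < x) :: real))" using ge phi K
        by (meson dual_order.strict_trans1 mult_pos_pos)
      then have Wne: "W \<noteq> {}" using J by (auto simp: W_def Int_def dest!: card_gt_0_iff[THEN iffD1])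
      have Wf: "finite W" using J by (simp add: W_def)
      define t0 where "t0 = Max (a ` W)"
      have t0x: "t0 < x" using Wne Wf by (auto simp: t0_def W_def)
      have "(\<Sum>j\<in>J. (of_bool (a j < x) :: real)) \<le> (\<Sum>j\<in>J. (of_bool (a j \<le> t0) :: real))"
        using Wf by (intro sum_mono) (auto simp: t0_def W_def)
      then have "t0 \<in> T" using Tiff ge by simp
      then have "Inf T \<le> t0" using bdd by (simp add: cInf_lower)
      then show False using x t0x by simp
    qed
  next
    assume lt: "(\<Sum>j\<in>J. (of_bool (a j < x) :: real)) < \<phi> * K"
    show "x \<le> Inf T"
    proof (rule cInf_greatest)
      show "T \<noteq> {}" using Tne by auto
      fix t assume "t \<in> T"
      show "x \<le> t"
      proof (rule ccontr)
        assume "\<not> x \<le> t"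
        then have "t < x" by simp
        then have "(\<Sum>j\<in>J. (of_bool (a j \<le> t) :: real)) \<le> (\<Sum>j\<in>J. (of_bool (a j < x) :: real))" by (rule cnt_le)
        moreover have "\<phi> * K \<le> (\<Sum>j\<in>J. (of_bool (a j \<le> t) :: real))" using Tiff \<open>t \<in> T\<close> by blast
        ultimately show False using lt by linarith
      qed
    qed
  qed
qed

lemma count_lemma:
  fixes a :: "nat \<Rightarrow> real" and J :: "nat set"
  assumes J: "finite J" and c: "c < real (card J)"
  shows "c \<le> (\<Sum>i\<in>J. (of_bool ((\<Sum>j\<in>J - {i}. (of_bool (a j < a i) :: real)) < c) :: real))"
proof (rule ccontr)
  define B where "B = {i\<in>J. (\<Sum>j\<in>J - {i}. (of_bool (a j < a i) :: real)) < c}"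
  assume "\<not> ?thesis"
  then have Bc: "real (card B) < c" using J by (simp add: B_def Int_def)
  define C where "C = J - B"
  have "card B \<le> card J" using J by (intro card_mono) (auto simp: B_def)
  have "C \<noteq> {}"
  proof
    assume "C = {}"
    then have "J \<subseteq> B" by (auto simp: C_def)
    then have "card J \<le> card B" using J by (intro card_mono) (auto simp: B_def)
    then show False using Bc c by linarith
  qed
  moreover have Cf: "finite C" using J by (simp add: C_def)
  ultimately have "Min (a ` C) \<in> a ` C" by (intro Min_in) auto
  then obtain i0 where i0: "i0 \<in> C" "a i0 = Min (a ` C)" by auto
  have mn: "a i0 \<le> a j" if "j \<in> C" for j using i0 Cf that by simp
  have sub: "(J - {i0}) \<inter> {j. a j < a i0} \<subseteq> B"
  proof
    fix j assume "j \<in> (J - {i0}) \<inter> {j. a j < a i0}"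
    then show "j \<in> B" using mn[of j] by (auto simp: C_def)
  qed
  have "(\<Sum>j\<in>J - {i0}. (of_bool (a j < a i0) :: real)) = real (card ((J - {i0}) \<inter> {j. a j < a i0}))"
    using J by simp
  also have "\<dots> \<le> real (card B)" using sub J by (intro of_nat_mono card_mono) (auto simp: B_def)
  finally have "i0 \<in> B" using Bc i0 by (auto simp: B_def C_def)
  then show False using i0 by (auto simp: C_def)
qed


lemma cond_exp_indep:
  fixes M :: "'a measure" and D :: "'a \<Rightarrow> 'd" and Z :: "'a \<Rightarrow> 'z"
  assumes M: "prob_space M" and D[measurable]: "D \<in> measurable M T" and Z[measurable]: "Z \<in> measurable M N"
    and ind: "\<And>A B. A \<in> sets T \<Longrightarrow> B \<in> sets N \<Longrightarrow>
       measure M ((D -` A \<inter> space M) \<inter> (Z -` B \<inter> space M)) = measure M (D -` A \<inter> space M) * measure M (Z -` B \<inter> space M)" and Q[measurable]: "Q \<in> sets (T \<Otimes>\<^sub>M N)"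
  shows "(\<lambda>d. \<integral>z. (indicator Q (d, z) :: real) \<partial>(distr M N Z)) \<in> borel_measurable T"
    and "AE \<omega> in M. real_cond_exp M (vimage_algebra (space M) D T) (indicator {\<omega>\<in>space M. (D \<omega>, Z \<omega>) \<in> Q}) \<omega>
           = (\<integral>z. (indicator Q (D \<omega>, z) :: real) \<partial>(distr M N Z))"
proof -
  interpret prob_space M by fact
  let ?\<nu> = "distr M N Z" and ?P = "distr M T D"
  let ?F = "vimage_algebra (space M) D T"
  interpret nu: prob_space ?\<nu> by (rule prob_space_distr) simp
  interpret P: prob_space ?P by (rule prob_space_distr) simp
  interpret PN: pair_prob_space ?P ?\<nu> by unfold_locales
  define g where "g d = (\<integral>z. (indicator Q (d, z) :: real) \<partial>?\<nu>)" for d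
  have Q': "Q \<in> sets (T \<Otimes>\<^sub>M ?\<nu>)" using Q by (simp add: sets_pair_measure_cong[OF refl sets_distr])
  have gm: "g \<in> borel_measurable T" unfolding g_def
  proof (rule nu.borel_measurable_lebesgue_integral[of "\<lambda>d z. indicator Q (d,z)" T])
    have "indicator Q \<in> borel_measurable (T \<Otimes>\<^sub>M ?\<nu>)" using Q' by (rule borel_measurable_indicator)
    then show "(\<lambda>(d, z). indicator Q (d, z) :: real) \<in> borel_measurable (T \<Otimes>\<^sub>M ?\<nu>)"
      by (simp add: case_prod_beta')
  qed
  then show "(\<lambda>d. \<integral>z. (indicator Q (d, z) :: real) \<partial>(distr M N Z)) \<in> borel_measurable T" by (simp add: g_def)
  have sub: "subalgebra M ?F"
    unfolding subalgebra_def
  proof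
    show "space ?F = space M" by simp
    have "D \<in> space M \<rightarrow> space T" using D by (auto simp: measurable_def)
    then show "sets ?F \<subseteq> sets M" by (auto simp: sets_vimage_algebra2)
  qed
  interpret S: finite_measure_subalgebra M ?F by unfold_locales (rule sub)
  have distr_eq: "?P \<Otimes>\<^sub>M ?\<nu> = distr M (T \<Otimes>\<^sub>M N) (\<lambda>x. (D x, Z x))"
  proof (rule pair_measure_eqI)
    show "sigma_finite_measure ?P" ..
    show "sigma_finite_measure ?\<nu>" ..
    show "sets (?P \<Otimes>\<^sub>M ?\<nu>) = sets (distr M (T \<Otimes>\<^sub>M N) (\<lambda>x. (D x, Z x)))" by simp
    fix A B assume A: "A \<in> sets ?P" and B: "B \<in> sets ?\<nu>"
    have "emeasure (distr M (T \<Otimes>\<^sub>M N) (\<lambda>x. (D x, Z x))) (A \<times> B) = emeasure M ((\<lambda>x. (D x, Z x)) -` (A \<times> B) \<inter> space M)"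
      using A B by (intro emeasure_distr) auto
    also have "\<dots> = emeasure M (D -` A \<inter> space M) * emeasure M (Z -` B \<inter> space M)"
    proof -
      have "(\<lambda>x. (D x, Z x)) -` (A \<times> B) \<inter> space M = (D -` A \<inter> space M) \<inter> (Z -` B \<inter> space M)" by auto
      then show ?thesis using ind[of A B] A B
        by (simp add: emeasure_eq_measure measure_nonneg ennreal_mult)
    qed
    also have "\<dots> = emeasure ?P A * emeasure ?\<nu> B"
      using A B by (simp add: emeasure_distr)
    finally show "emeasure ?P A * emeasure ?\<nu> B = emeasure (distr M (T \<Otimes>\<^sub>M N) (\<lambda>x. (D x, Z x))) (A \<times> B)" by simp
  qed
  let ?E = "{\<omega>\<in>space M. (D \<omega>, Z \<omega>) \<in> Q}"
  have Em[measurable]: "?E \<in> sets M" by measurable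
  show "AE \<omega> in M. real_cond_exp M ?F (indicator ?E) \<omega> = (\<integral>z. (indicator Q (D \<omega>, z) :: real) \<partial>?\<nu>)"
    unfolding g_def[symmetric]
  proof (rule S.real_cond_exp_charact)
    show "integrable M (indicator ?E :: _ \<Rightarrow> real)" using Em by (intro integrable_real_indicator) (auto simp: emeasure_eq_measure)
    have gi: "g d = measure ?\<nu> (Pair d -` Q \<inter> space ?\<nu>)" for d
    proof -
      have "(\<lambda>z. indicator Q (d,z) :: real) = indicator (Pair d -` Q)" by (auto simp: indicator_def)
      then show ?thesis by (simp add: g_def)
    qed
    have gb: "\<bar>g d\<bar> \<le> 1" for d
      using gi[of d] nu.prob_le_1[of "Pair d -` Q \<inter> space ?\<nu>"] measure_nonneg[of ?\<nu> "Pair d -` Q \<inter> space ?\<nu>"] by simp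
    show "integrable M (\<lambda>\<omega>. g (D \<omega>))"
      by (rule integrable_const_bound[where B=1]) (use gb gm in auto)
    show "(\<lambda>\<omega>. g (D \<omega>)) \<in> borel_measurable ?F"
      by (rule measurable_compose[OF _ gm]) (rule measurable_vimage_algebra1, use D in \<open>auto simp: measurable_def\<close>)
    fix A assume "A \<in> sets ?F"
    then obtain B where B[measurable]: "B \<in> sets T" and A: "A = D -` B \<inter> space M"
      using D by (auto simp: sets_vimage_algebra2 measurable_def)
    define h where "h p = (indicator B (fst p) * indicator Q p :: real)" for p :: "_ \<times> _"
    have hm[measurable]: "h \<in> borel_measurable (T \<Otimes>\<^sub>M N)" unfolding h_def by measurable
    have hm': "h \<in> borel_measurable (?P \<Otimes>\<^sub>M ?\<nu>)"
      using hm by (simp add: measurable_cong_sets[OF sets_pair_measure_cong[OF sets_distr sets_distr] refl])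
    have hint: "integrable (?P \<Otimes>\<^sub>M ?\<nu>) h"
      by (rule PN.P.integrable_const_bound[where B=1]) (use hm' in \<open>auto simp: h_def indicator_def\<close>)
    have "(\<integral>\<omega>\<in>A. (indicator ?E \<omega> :: real) \<partial>M) = (\<integral>\<omega>. h (D \<omega>, Z \<omega>) \<partial>M)"
      unfolding set_lebesgue_integral_def
      by (rule Bochner_Integration.integral_cong) (auto simp: A h_def indicator_def)
    also have "\<dots> = (\<integral>p. h p \<partial>distr M (T \<Otimes>\<^sub>M N) (\<lambda>x. (D x, Z x)))"
      by (rule integral_distr[symmetric]) auto
    also have "\<dots> = (\<integral>p. h p \<partial>(?P \<Otimes>\<^sub>M ?\<nu>))" by (simp add: distr_eq)
    also have "\<dots> = (\<integral>d. (\<integral>z. h (d, z) \<partial>?\<nu>) \<partial>?P)" by (rule PN.integral_fst'[OF hint, symmetric])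
    also have "\<dots> = (\<integral>d. indicator B d * g d \<partial>?P)"
      by (simp add: h_def g_def)
    also have "\<dots> = (\<integral>\<omega>. indicator B (D \<omega>) * g (D \<omega>) \<partial>M)"
      by (rule integral_distr) (use gm in auto)
    also have "\<dots> = (\<integral>\<omega>\<in>A. g (D \<omega>) \<partial>M)"
      unfolding set_lebesgue_integral_def
      by (rule Bochner_Integration.integral_cong) (auto simp: A indicator_def)
    finally show "(\<integral>\<omega>\<in>A. (indicator ?E \<omega> :: real) \<partial>M) = (\<integral>\<omega>\<in>A. g (D \<omega>) \<partial>M)" .
  qed
qed


theorem theorem4p1:
  fixes M :: "'a measure" and MX :: "'x measure" and MY :: "'y measure"
    and X :: "nat \<Rightarrow> 'a \<Rightarrow> 'x" and Y :: "nat \<Rightarrow> 'a \<Rightarrow> 'y"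
    and Xs :: "'a \<Rightarrow> 'x" and Ys :: "'a \<Rightarrow> 'y"
    and ntrain ntest :: nat
    and s :: "(nat \<Rightarrow> 'x \<times> 'y) \<Rightarrow> 'x \<times> 'y \<Rightarrow> real"
    and \<alpha> \<epsilon> \<delta> :: real and \<epsilon>i :: "nat \<Rightarrow> real"
  defines "n \<equiv> ntrain + ntest"
    and "Itest \<equiv> {ntrain + 1..ntrain + ntest}"
    and "TR \<equiv> PiM {1..ntrain} (\<lambda>_. MX \<Otimes>\<^sub>M MY)"
  assumes M: "prob_space M"
    and X_meas: "\<And>i. i \<in> {1..n} \<Longrightarrow> X i \<in> measurable M MX"
    and Y_meas: "\<And>i. i \<in> {1..n} \<Longrightarrow> Y i \<in> measurable M MY"
    and Xs_meas: "Xs \<in> measurable M MX" and Ys_meas: "Ys \<in> measurable M MY"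
    and indep: "prob_space.indep_set M
                  (sets (vimage_algebra (space M) (\<lambda>\<omega>. (\<lambda>i\<in>{1..n}. (X i \<omega>, Y i \<omega>)))
                           (PiM {1..n} (\<lambda>_. MX \<Otimes>\<^sub>M MY))))
                  (sets (vimage_algebra (space M) (\<lambda>\<omega>. (Xs \<omega>, Ys \<omega>)) (MX \<Otimes>\<^sub>M MY)))"
    and ident: "\<And>i. i \<in> {1..n} \<Longrightarrow>
                  distr M (MX \<Otimes>\<^sub>M MY) (\<lambda>\<omega>. (X i \<omega>, Y i \<omega>)) = distr M (MX \<Otimes>\<^sub>M MY) (\<lambda>\<omega>. (Xs \<omega>, Ys \<omega>))"
    and ntrain_pos: "ntrain > 0" and ntest_ge: "ntest \<ge> 2"
    and s_meas: "(\<lambda>(d, z). s d z) \<in> borel_measurable (TR \<Otimes>\<^sub>M (MX \<Otimes>\<^sub>M MY))"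
    and \<alpha>: "0 < \<alpha>" "\<alpha> < 1"
    and \<epsilon>: "0 < \<epsilon>" "\<epsilon> < 1"
    and \<epsilon>i: "\<And>i. i \<in> Itest \<Longrightarrow> 0 < \<epsilon>i i \<and> \<epsilon>i i < 1"
    and \<delta>: "0 < \<delta>" "\<delta> < 1"
    and hyp1: "\<And>q i. q \<in> borel_measurable TR \<Longrightarrow> i \<in> Itest \<Longrightarrow>
        \<bar>measure M {\<omega> \<in> space M. s (train_data X Y ntrain \<omega>) (X i \<omega>, Y i \<omega>) \<le> q (train_data X Y ntrain \<omega>)}
          - (\<integral>\<omega>. P_q_train M MX MY X Y Xs Ys ntrain s q \<omega> \<partial>M)\<bar> \<le> \<epsilon>i i"
    and hyp2: "\<And>q. q \<in> borel_measurable TR \<Longrightarrow>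
        measure M {\<omega> \<in> space M.
          \<bar>(\<Sum>i\<in>Itest. (of_bool (s (train_data X Y ntrain \<omega>) (X i \<omega>, Y i \<omega>) \<le> q (train_data X Y ntrain \<omega>)) :: real)) / real ntest
            - P_q_train M MX MY X Y Xs Ys ntrain s q \<omega>\<bar> \<le> \<epsilon>} \<ge> 1 - \<delta>"
  shows "(\<forall>i\<in>Itest.
           measure M {\<omega> \<in> space M.
             s (train_data X Y ntrain \<omega>) (X i \<omega>, Y i \<omega>)
               \<le> cal_quantile (s (train_data X Y ntrain \<omega>)) Itest i (\<lambda>j. (X j \<omega>, Y j \<omega>)) (1 - \<alpha>)}
           \<ge> 1 - \<alpha> - \<epsilon>i i - \<epsilon> - \<delta> - 1 / real ntest) \<and>
         measure M {\<omega> \<in> space M.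
           (\<Sum>i\<in>Itest. (of_bool (s (train_data X Y ntrain \<omega>) (X i \<omega>, Y i \<omega>)
               \<le> cal_quantile (s (train_data X Y ntrain \<omega>)) Itest i (\<lambda>j. (X j \<omega>, Y j \<omega>)) (1 - \<alpha>)) :: real))
             / real ntest \<ge> 1 - \<alpha> - \<epsilon> - 1 / real ntest}
         \<ge> 1 - 2 * \<delta>"
proof -
  interpret prob_space M by (rule M)
  define D where "D = train_data X Y ntrain"
  define Z where "Z = (\<lambda>\<omega>. (Xs \<omega>, Ys \<omega>))"
  define ZZ where "ZZ = MX \<Otimes>\<^sub>M MY"
  define \<nu> where "\<nu> = distr M ZZ Z"
  define CDF where "CDF d t = measure \<nu> {z \<in> space ZZ. s d z \<le> t}" for d t
  define L where "L = 1 - \<alpha> - \<epsilon> - 1 / real ntest"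
  define c where "c = (1 - \<alpha>) * (real ntest - 1)"
  note hyp1' = hyp1[folded D_def]
  note hyp2' = hyp2[folded D_def]
  have Itest_sub: "Itest \<subseteq> {1..n}" by (auto simp: Itest_def n_def)
  have Itest_fin: "finite Itest" by (simp add: Itest_def)
  have Itest_card: "card Itest = ntest" by (simp add: Itest_def)
  have Zm[measurable]: "Z \<in> measurable M ZZ" unfolding Z_def ZZ_def using Xs_meas Ys_meas by measurable
  have Dm[measurable]: "D \<in> measurable M TR"
    unfolding D_def train_data_def TR_def
  proof (rule measurable_restrict)
    fix i assume "i \<in> {1..ntrain}"
    then have "i \<in> {1..n}" by (auto simp: n_def)
    then show "(\<lambda>\<omega>. (X i \<omega>, Y i \<omega>)) \<in> measurable M (MX \<Otimes>\<^sub>M MY)"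
      using X_meas Y_meas by measurable
  qed
  have sm[measurable]: "(\<lambda>(d, z). s d z) \<in> borel_measurable (TR \<Otimes>\<^sub>M ZZ)" using s_meas by (simp add: ZZ_def)
  have Sm: "(\<lambda>\<omega>. s (D \<omega>) (X j \<omega>, Y j \<omega>)) \<in> borel_measurable M" if "j \<in> {1..n}" for j
  proof -
    have "(\<lambda>\<omega>. (D \<omega>, (X j \<omega>, Y j \<omega>))) \<in> measurable M (TR \<Otimes>\<^sub>M ZZ)"
      using X_meas[OF that] Y_meas[OF that] unfolding ZZ_def by measurable
    from measurable_compose[OF this sm] show ?thesis by simp
  qed
  have sd: "(\<lambda>z. s d z) \<in> borel_measurable ZZ" if "d \<in> space TR" for d
  proof -
    have "(\<lambda>z. (d, z)) \<in> measurable ZZ (TR \<Otimes>\<^sub>M ZZ)" using that by measurable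
    from measurable_compose[OF this sm] show ?thesis by simp
  qed
  interpret nu: prob_space \<nu> unfolding \<nu>_def by (rule prob_space_distr) simp
  have space_nu: "space \<nu> = space ZZ" and sets_nu: "sets \<nu> = sets ZZ" by (simp_all add: \<nu>_def)
  have setm: "{z \<in> space ZZ. s d z \<le> t} \<in> sets \<nu>" if "d \<in> space TR" for d t
    unfolding sets_nu using sd[OF that] by measurable
  have setm': "{z \<in> space ZZ. s d z < t} \<in> sets \<nu>" if "d \<in> space TR" for d t
    unfolding sets_nu using sd[OF that] by measurable
  have ind: "measure M ((D -` A \<inter> space M) \<inter> (Z -` B \<inter> space M)) = measure M (D -` A \<inter> space M) * measure M (Z -` B \<inter> space M)"
    if A: "A \<in> sets TR" and B: "B \<in> sets ZZ" for A B
  proof (rule indep_setD[OF indep])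
    let ?R = "\<lambda>f. restrict f {1..ntrain}"
    let ?PF = "PiM {1..n} (\<lambda>_. MX \<Otimes>\<^sub>M MY)"
    let ?Df = "\<lambda>\<omega>. (\<lambda>i\<in>{1..n}. (X i \<omega>, Y i \<omega>))"
    have Rm: "?R \<in> measurable ?PF TR" unfolding TR_def
      by (rule measurable_restrict_subset) (auto simp: n_def)
    have "?R -` A \<inter> space ?PF \<in> sets ?PF" using Rm A by (rule measurable_sets)
    then have "?Df -` (?R -` A \<inter> space ?PF) \<inter> space M \<in> sets (vimage_algebra (space M) ?Df ?PF)"
      by (rule in_vimage_algebra)
    moreover have "?Df -` (?R -` A \<inter> space ?PF) \<inter> space M = D -` A \<inter> space M"
    proof -
      have "?R (?Df \<omega>) = D \<omega>" for \<omega> by (auto simp: D_def train_data_def n_def fun_eq_iff)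
      moreover have "?Df \<omega> \<in> space ?PF" if "\<omega> \<in> space M" for \<omega>
        using that measurable_space[OF X_meas] measurable_space[OF Y_meas] by (auto simp: space_PiM space_pair_measure)
      ultimately show ?thesis by auto
    qed
    ultimately show "D -` A \<inter> space M \<in> sets (vimage_algebra (space M) ?Df ?PF)" by simp
    show "Z -` B \<inter> space M \<in> sets (vimage_algebra (space M) (\<lambda>\<omega>. (Xs \<omega>, Ys \<omega>)) (MX \<Otimes>\<^sub>M MY))"
      using B unfolding Z_def ZZ_def by (rule in_vimage_algebra)
  qed
  have Qm: "{p \<in> space (TR \<Otimes>\<^sub>M ZZ). s (fst p) (snd p) \<le> g (fst p)} \<in> sets (TR \<Otimes>\<^sub>M ZZ)"
    if g[measurable]: "g \<in> borel_measurable TR" for g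
  proof -
    have "(\<lambda>p. (\<lambda>(d, z). s d z) p) \<in> borel_measurable (TR \<Otimes>\<^sub>M ZZ)" by (rule sm)
    then have [measurable]: "(\<lambda>p. s (fst p) (snd p)) \<in> borel_measurable (TR \<Otimes>\<^sub>M ZZ)"
      by (simp add: case_prod_beta')
    show ?thesis by measurable
  qed
  have ind_int: "(\<integral>z. (indicator {p \<in> space (TR \<Otimes>\<^sub>M ZZ). s (fst p) (snd p) \<le> g (fst p)} (d, z) :: real) \<partial>\<nu>) = CDF d (g d)"
    if "d \<in> space TR" for g d
  proof -
    have "(\<lambda>z. indicator {p \<in> space (TR \<Otimes>\<^sub>M ZZ). s (fst p) (snd p) \<le> g (fst p)} (d, z) :: real)
        = indicator {z \<in> space ZZ. s d z \<le> g d}"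
      using that by (auto simp: indicator_def space_pair_measure)
    then show ?thesis using setm[OF that] by (simp add: CDF_def space_nu Int_absorb2 sets.sets_into_space)
  qed
  have CDFm: "(\<lambda>d. CDF d (g d)) \<in> borel_measurable TR" if g: "g \<in> borel_measurable TR" for g
  proof -
    have "(\<lambda>d. \<integral>z. (indicator {p \<in> space (TR \<Otimes>\<^sub>M ZZ). s (fst p) (snd p) \<le> g (fst p)} (d, z) :: real) \<partial>distr M ZZ Z) \<in> borel_measurable TR"
      by (rule cond_exp_indep(1)[OF M Dm Zm ind Qm[OF g]])
    then show ?thesis
      by (rule measurable_cong[THEN iffD1, rotated]) (use ind_int in \<open>simp add: \<nu>_def\<close>)
  qed
  have Pq: "AE \<omega> in M. P_q_train M MX MY X Y Xs Ys ntrain s g \<omega> = CDF (D \<omega>) (g (D \<omega>))"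
    if g: "g \<in> borel_measurable TR" for g
  proof -
    let ?Q = "{p \<in> space (TR \<Otimes>\<^sub>M ZZ). s (fst p) (snd p) \<le> g (fst p)}"
    have eq: "{\<omega>\<in>space M. (D \<omega>, Z \<omega>) \<in> ?Q} = {\<omega> \<in> space M. s (D \<omega>) (Xs \<omega>, Ys \<omega>) \<le> g (D \<omega>)}"
      using measurable_space[OF Dm] measurable_space[OF Zm] by (auto simp: space_pair_measure Z_def)
    have ae: "AE \<omega> in M. real_cond_exp M (vimage_algebra (space M) D TR) (indicator {\<omega>\<in>space M. (D \<omega>, Z \<omega>) \<in> ?Q}) \<omega>
           = (\<integral>z. (indicator ?Q (D \<omega>, z) :: real) \<partial>(distr M ZZ Z))"
      by (rule cond_exp_indep(2)[OF M Dm Zm ind Qm[OF g]])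
    show ?thesis
      unfolding P_q_train_def D_def[symmetric] TR_def[symmetric]
      using ae AE_space unfolding eq
    proof eventually_elim
      case (elim \<omega>)
      then show ?case using ind_int[of "D \<omega>" g] measurable_space[OF Dm, of \<omega>] by (simp add: \<nu>_def)
    qed
  qed
  have CDF_mono: "CDF d t \<le> CDF d t'" if "d \<in> space TR" "t \<le> t'" for d t t'
    unfolding CDF_def using that setm[OF that(1)] by (intro nu.finite_measure_mono) auto
  have CDF_low: "\<exists>b. CDF d b < L" if d: "d \<in> space TR" and L0: "0 < L" for d
  proof -
    define A where "A k = {z \<in> space ZZ. s d z \<le> - real k}" for k :: nat
    have "(\<lambda>k. measure \<nu> (A k)) \<longlonglongrightarrow> measure \<nu> (\<Inter>k. A k)"
    proof (rule nu.finite_Lim_measure_decseq)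
      show "range A \<subseteq> sets \<nu>" using setm[OF d] by (auto simp: A_def)
      show "decseq A" by (auto simp: decseq_def A_def)
    qed
    moreover have "(\<Inter>k. A k) = {}"
    proof (safe)
      fix z assume "z \<in> (\<Inter>k. A k)"
      obtain k :: nat where "- s d z < real k" using reals_Archimedean2 by blast
      moreover have "s d z \<le> - real k" using \<open>z \<in> (\<Inter>k. A k)\<close> by (auto simp: A_def)
      ultimately show "z \<in> {}" by linarith
    qed
    ultimately have "(\<lambda>k. measure \<nu> (A k)) \<longlonglongrightarrow> 0" by simp
    then have "eventually (\<lambda>k. measure \<nu> (A k) < L) sequentially" using L0 by (rule order_tendstoD)
    then obtain k where "measure \<nu> (A k) < L" by (auto dest: eventually_happens)
    then show ?thesis by (auto simp: CDF_def A_def)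
  qed
  have CDF_high: "\<exists>t. L \<le> CDF d t" if d: "d \<in> space TR" and L1: "L < 1" for d
  proof -
    define A where "A k = {z \<in> space ZZ. s d z \<le> real k}" for k :: nat
    have "(\<lambda>k. measure \<nu> (A k)) \<longlonglongrightarrow> measure \<nu> (\<Union>k. A k)"
    proof (rule nu.finite_Lim_measure_incseq)
      show "range A \<subseteq> sets \<nu>" using setm[OF d] by (auto simp: A_def)
      show "incseq A" by (auto simp: incseq_def A_def intro: order_trans)
    qed
    moreover have "(\<Union>k. A k) = space \<nu>"
    proof (safe)
      fix z assume "z \<in> space \<nu>"
      obtain k :: nat where "s d z < real k" using reals_Archimedean2 by blast
      with \<open>z \<in> space \<nu>\<close> have "z \<in> A k" by (auto simp: A_def space_nu)
      then show "z \<in> (\<Union>k. A k)" by blast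
    qed (auto simp: A_def space_nu)
    ultimately have "(\<lambda>k. measure \<nu> (A k)) \<longlonglongrightarrow> 1" by (simp add: nu.prob_space)
    then have "eventually (\<lambda>k. L < measure \<nu> (A k)) sequentially" using L1 by (rule order_tendstoD)
    then obtain k where "L < measure \<nu> (A k)" by (auto dest: eventually_happens)
    then show ?thesis by (auto simp: CDF_def A_def intro!: exI[of _ "real k"])
  qed
  have CDF_rc: "L \<le> CDF d x" if d: "d \<in> space TR" and h: "\<And>k. L \<le> CDF d (x + 1 / real (Suc k))" for d x
  proof -
    define A where "A k = {z \<in> space ZZ. s d z \<le> x + 1 / real (Suc k)}" for k :: nat
    have "(\<lambda>k. measure \<nu> (A k)) \<longlonglongrightarrow> measure \<nu> (\<Inter>k. A k)"
    proof (rule nu.finite_Lim_measure_decseq)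
      show "range A \<subseteq> sets \<nu>" using setm[OF d] by (auto simp: A_def)
      show "decseq A"
        unfolding decseq_def A_def
      proof (intro allI impI subsetI)
        fix m k :: nat and z assume "m \<le> k" "z \<in> {z \<in> space ZZ. s d z \<le> x + 1 / real (Suc k)}"
        moreover have "1 / real (Suc k) \<le> 1 / real (Suc m)" using \<open>m \<le> k\<close> by (simp add: frac_le)
        ultimately show "z \<in> {z \<in> space ZZ. s d z \<le> x + 1 / real (Suc m)}" by auto
      qed
    qed
    moreover have "(\<Inter>k. A k) = {z \<in> space ZZ. s d z \<le> x}"
    proof (safe)
      fix z assume z: "z \<in> (\<Inter>k. A k)"
      have zA: "z \<in> A k" for k using z by blast
      then show "z \<in> space ZZ" unfolding A_def by blast
      show "s d z \<le> x"
      proof (rule ccontr)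
        assume "\<not> s d z \<le> x"
        then have "0 < s d z - x" by simp
        then obtain k where k: "inverse (real (Suc k)) < s d z - x" using reals_Archimedean by blast
        have "s d z \<le> x + 1 / real (Suc k)" using zA[of k] unfolding A_def by blast
        then show False using k by (simp add: inverse_eq_divide)
      qed
    next
      fix z k assume "z \<in> space ZZ" "s d z \<le> x"
      moreover have "0 \<le> 1 / real (Suc k)" by simp
      ultimately have "s d z \<le> x + 1 / real (Suc k)" by linarith
      then show "z \<in> A k" using \<open>z \<in> space ZZ\<close> unfolding A_def by blast
    qed
    ultimately have "(\<lambda>k. CDF d (x + 1 / real (Suc k))) \<longlonglongrightarrow> CDF d x" by (simp add: CDF_def A_def)
    then show ?thesis by (rule LIMSEQ_le_const) (use h in auto)
  qed
  let ?S = "\<lambda>j \<omega>. s (D \<omega>) (X j \<omega>, Y j \<omega>)"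
  have SmI: "?S j \<in> borel_measurable M" if "j \<in> Itest" for j using Sm Itest_sub that by blast
  have succ_char: "(s (D \<omega>) (X i \<omega>, Y i \<omega>) \<le> cal_quantile (s (D \<omega>)) Itest i (\<lambda>j. (X j \<omega>, Y j \<omega>)) (1 - \<alpha>))
      \<longleftrightarrow> (\<Sum>j\<in>Itest - {i}. (of_bool (?S j \<omega> < ?S i \<omega>) :: real)) < c" if i: "i \<in> Itest" for i \<omega>
  proof -
    have cardJ: "real (card (Itest - {i})) = real ntest - 1"
      using i Itest_fin Itest_card ntest_ge by (simp add: card_Diff_singleton of_nat_diff)
    have "(1 - \<alpha>) * (real ntest - 1) \<le> real (card (Itest - {i}))"
      unfolding cardJ using \<alpha> ntest_ge by (simp add: mult_le_cancel_right1)
    then show ?thesis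
      unfolding cal_quantile_def Itest_card c_def
      using calq_char[where J="Itest - {i}" and K="real ntest - 1" and \<phi>="1 - \<alpha>" and a="\<lambda>j. ?S j \<omega>" and x="?S i \<omega>"] Itest_fin ntest_ge \<alpha>
      by simp
  qed
  have claim2: "measure M {\<omega> \<in> space M.
           (\<Sum>i\<in>Itest. (of_bool (s (D \<omega>) (X i \<omega>, Y i \<omega>)
               \<le> cal_quantile (s (D \<omega>)) Itest i (\<lambda>j. (X j \<omega>, Y j \<omega>)) (1 - \<alpha>)) :: real))
             / real ntest \<ge> 1 - \<alpha> - \<epsilon> - 1 / real ntest} \<ge> 1 - 2 * \<delta>"
  proof -
    have "c \<le> (\<Sum>i\<in>Itest. (of_bool (s (D \<omega>) (X i \<omega>, Y i \<omega>)
               \<le> cal_quantile (s (D \<omega>)) Itest i (\<lambda>j. (X j \<omega>, Y j \<omega>)) (1 - \<alpha>)) :: real))" for \<omega>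
    proof -
      have "(\<Sum>i\<in>Itest. (of_bool (s (D \<omega>) (X i \<omega>, Y i \<omega>)
               \<le> cal_quantile (s (D \<omega>)) Itest i (\<lambda>j. (X j \<omega>, Y j \<omega>)) (1 - \<alpha>)) :: real))
          = (\<Sum>i\<in>Itest. (of_bool ((\<Sum>j\<in>Itest - {i}. (of_bool (?S j \<omega> < ?S i \<omega>) :: real)) < c) :: real))"
      proof (rule sum.cong[OF refl])
        fix i assume "i \<in> Itest"
        from succ_char[OF this, of \<omega>] show "(of_bool (s (D \<omega>) (X i \<omega>, Y i \<omega>)
               \<le> cal_quantile (s (D \<omega>)) Itest i (\<lambda>j. (X j \<omega>, Y j \<omega>)) (1 - \<alpha>)) :: real)
          = (of_bool ((\<Sum>j\<in>Itest - {i}. (of_bool (?S j \<omega> < ?S i \<omega>) :: real)) < c) :: real)"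
          by (simp only:)
      qed
      moreover have "c < real (card Itest)"
      proof -
        have "(1 - \<alpha>) * (real ntest - 1) \<le> 1 * (real ntest - 1)"
          using \<alpha> ntest_ge by (intro mult_right_mono) auto
        then show ?thesis unfolding Itest_card c_def by simp
      qed
      ultimately show ?thesis using count_lemma[where J=Itest and c=c and a="\<lambda>j. ?S j \<omega>"] Itest_fin
        by (simp only:)
    qed
    moreover have "1 - \<alpha> - \<epsilon> - 1 / real ntest \<le> c / real ntest"
    proof -
      have m0: "real ntest > 0" using ntest_ge by simp
      have "real ntest * (1 - \<alpha> - \<epsilon> - 1 / real ntest) = real ntest * (1 - \<alpha>) - real ntest * \<epsilon> - 1"
        using m0 by (simp add: algebra_simps)
      also have "\<dots> \<le> c" unfolding c_def using \<alpha> \<epsilon> m0 by (simp add: algebra_simps)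
      finally show ?thesis using m0 by (simp add: pos_le_divide_eq mult.commute)
    qed
    ultimately have "1 - \<alpha> - \<epsilon> - 1 / real ntest \<le> (\<Sum>i\<in>Itest. (of_bool (s (D \<omega>) (X i \<omega>, Y i \<omega>)
               \<le> cal_quantile (s (D \<omega>)) Itest i (\<lambda>j. (X j \<omega>, Y j \<omega>)) (1 - \<alpha>)) :: real)) / real ntest" for \<omega>
      using ntest_ge by (meson divide_right_mono of_nat_0_le_iff order_trans)
    then have "\<omega> \<in> {\<omega> \<in> space M.
           (\<Sum>i\<in>Itest. (of_bool (s (D \<omega>) (X i \<omega>, Y i \<omega>)
               \<le> cal_quantile (s (D \<omega>)) Itest i (\<lambda>j. (X j \<omega>, Y j \<omega>)) (1 - \<alpha>)) :: real))
             / real ntest \<ge> 1 - \<alpha> - \<epsilon> - 1 / real ntest}" if "\<omega> \<in> space M" for \<omega>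
      using that by blast
    then have "{\<omega> \<in> space M.
           (\<Sum>i\<in>Itest. (of_bool (s (D \<omega>) (X i \<omega>, Y i \<omega>)
               \<le> cal_quantile (s (D \<omega>)) Itest i (\<lambda>j. (X j \<omega>, Y j \<omega>)) (1 - \<alpha>)) :: real))
             / real ntest \<ge> 1 - \<alpha> - \<epsilon> - 1 / real ntest} = space M" by blast
    then show ?thesis using \<delta> by (simp add: prob_space)
  qed
  have claim1: "measure M {\<omega> \<in> space M.
             s (D \<omega>) (X i \<omega>, Y i \<omega>)
               \<le> cal_quantile (s (D \<omega>)) Itest i (\<lambda>j. (X j \<omega>, Y j \<omega>)) (1 - \<alpha>)}
           \<ge> 1 - \<alpha> - \<epsilon>i i - \<epsilon> - \<delta> - 1 / real ntest" if i: "i \<in> Itest" for i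
  proof -
    define Succ where "Succ = {\<omega> \<in> space M.
             s (D \<omega>) (X i \<omega>, Y i \<omega>)
               \<le> cal_quantile (s (D \<omega>)) Itest i (\<lambda>j. (X j \<omega>, Y j \<omega>)) (1 - \<alpha>)}"
    have Succ_eq: "Succ = {\<omega> \<in> space M. (\<Sum>j\<in>Itest - {i}. (of_bool (?S j \<omega> < ?S i \<omega>) :: real)) < c}"
      unfolding Succ_def using succ_char[OF i] by blast
    have Succ_m: "Succ \<in> sets M"
    proof -
      have "(\<lambda>\<omega>. (\<Sum>j\<in>Itest - {i}. (of_bool (?S j \<omega> < ?S i \<omega>) :: real))) \<in> borel_measurable M"
      proof (rule borel_measurable_sum)
        fix j assume "j \<in> Itest - {i}"
        then have [measurable]: "?S j \<in> borel_measurable M" using SmI by blast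
        have [measurable]: "?S i \<in> borel_measurable M" using SmI i by blast
        show "(\<lambda>\<omega>. (of_bool (?S j \<omega> < ?S i \<omega>) :: real)) \<in> borel_measurable M" by measurable
      qed
      then show ?thesis unfolding Succ_eq by measurable
    qed
    show ?thesis
    proof (cases "L \<le> 0")
      case True
      have "1 - \<alpha> - \<epsilon>i i - \<epsilon> - \<delta> - 1 / real ntest < 0"
        using True \<epsilon>i[OF i] \<delta> unfolding L_def by linarith
      then show ?thesis using measure_nonneg[of M] by (meson less_le_not_le order_trans nle_le)
    next
      case False
      then have L0: "0 < L" by simp
      have "0 \<le> 1 / real ntest" by simp
      then have L1: "L < 1" unfolding L_def using \<alpha> \<epsilon> by linarith
      define q where "q d = Inf {t. L \<le> CDF d t}" for d
      have q_props: "(\<forall>t. L \<le> CDF d t \<longrightarrow> q d \<le> t) \<and> L \<le> CDF d (q d)" if d: "d \<in> space TR" for d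
      proof -
        obtain b where b: "CDF d b < L" using CDF_low[OF d L0] by blast
        obtain t0 where t0: "L \<le> CDF d t0" using CDF_high[OF d L1] by blast
        have ne: "{t. L \<le> CDF d t} \<noteq> {}" using t0 by blast
        have bdd: "bdd_below {t. L \<le> CDF d t}"
        proof (rule bdd_belowI[of _ b])
          fix t assume "t \<in> {t. L \<le> CDF d t}"
          then show "b \<le> t" using CDF_mono[OF d, of t b] b by (cases "t \<le> b") auto
        qed
        have q1: "q d \<le> t" if "L \<le> CDF d t" for t
          unfolding q_def using that bdd by (intro cInf_lower) auto
        have "L \<le> CDF d (q d + 1 / real (Suc k))" for k
        proof -
          have "q d < q d + 1 / real (Suc k)" by simp
          then obtain t where t: "t \<in> {t. L \<le> CDF d t}" "t < q d + 1 / real (Suc k)"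
            unfolding q_def using ne by (subst (asm) cInf_less_iff) (auto simp: bdd)
          then show ?thesis using CDF_mono[OF d, of t "q d + 1 / real (Suc k)"] by auto
        qed
        then have "L \<le> CDF d (q d)" by (rule CDF_rc[OF d])
        with q1 show ?thesis by blast
      qed
      have q1: "q d \<le> t" if "d \<in> space TR" "L \<le> CDF d t" for d t using q_props that by blast
      have q2: "L \<le> CDF d (q d)" if "d \<in> space TR" for d using q_props that by blast
      have q3: "CDF d t < L" if "d \<in> space TR" "t < q d" for d t
        using q1[OF that(1), of t] that(2) by linarith
      have qm[measurable]: "q \<in> borel_measurable TR"
        unfolding borel_measurable_iff_le
      proof
        fix a
        have [measurable]: "(\<lambda>d. CDF d a) \<in> borel_measurable TR" using CDFm[of "\<lambda>_. a"] by simp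
        have "{w \<in> space TR. q w \<le> a} = {w \<in> space TR. L \<le> CDF w a}"
          using q1 q2 CDF_mono by (auto intro: order_trans) (meson order_trans)
        also have "\<dots> \<in> sets TR" by measurable
        finally show "{w \<in> space TR. q w \<le> a} \<in> sets TR" .
      qed
      have CDFq_m: "(\<lambda>\<omega>. CDF (D \<omega>) (q (D \<omega>))) \<in> borel_measurable M"
        using measurable_compose[OF Dm CDFm[OF qm]] by simp
      have CDF01: "0 \<le> CDF d t \<and> CDF d t \<le> 1" for d t
        unfolding CDF_def by (simp add: nu.prob_le_1)
      define A where "A = {\<omega> \<in> space M. s (D \<omega>) (X i \<omega>, Y i \<omega>) \<le> q (D \<omega>)}"
      have A_m: "A \<in> sets M"
      proof -
        have [measurable]: "?S i \<in> borel_measurable M" using SmI i by blast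
        show ?thesis unfolding A_def by measurable
      qed
      have h1: "\<bar>measure M A - (\<integral>\<omega>. P_q_train M MX MY X Y Xs Ys ntrain s q \<omega> \<partial>M)\<bar> \<le> \<epsilon>i i"
        using hyp1'[OF qm i] unfolding A_def .
      have "(\<integral>\<omega>. P_q_train M MX MY X Y Xs Ys ntrain s q \<omega> \<partial>M) = (\<integral>\<omega>. CDF (D \<omega>) (q (D \<omega>)) \<partial>M)"
        by (rule integral_cong_AE) (use Pq[OF qm] CDFq_m in \<open>auto simp: P_q_train_def\<close>)
      also have "\<dots> \<ge> L"
      proof (rule integral_ge_const)
        show "integrable M (\<lambda>\<omega>. CDF (D \<omega>) (q (D \<omega>)))"
          by (rule integrable_const_bound[where B=1]) (use CDF01 CDFq_m in auto)
        show "AE \<omega> in M. L \<le> CDF (D \<omega>) (q (D \<omega>))"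
          using q2 measurable_space[OF Dm] by auto
      qed
      finally have A_ge: "measure M A \<ge> L - \<epsilon>i i" using h1 by linarith
      define G where "G = {\<omega> \<in> space M. c \<le> (\<Sum>j\<in>Itest. (of_bool (?S j \<omega> < q (D \<omega>)) :: real))}"
      define GN where "GN N = {\<omega> \<in> space M. c \<le> (\<Sum>j\<in>Itest. (of_bool (?S j \<omega> \<le> q (D \<omega>) - 1 / real (Suc N)) :: real))}" for N
      have sum_m: "(\<lambda>\<omega>. (\<Sum>j\<in>Itest. (of_bool (?S j \<omega> < h \<omega>) :: real))) \<in> borel_measurable M"
        "(\<lambda>\<omega>. (\<Sum>j\<in>Itest. (of_bool (?S j \<omega> \<le> h \<omega>) :: real))) \<in> borel_measurable M"
        if [measurable]: "h \<in> borel_measurable M" for h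
      proof -
        show "(\<lambda>\<omega>. (\<Sum>j\<in>Itest. (of_bool (?S j \<omega> < h \<omega>) :: real))) \<in> borel_measurable M"
        proof (rule borel_measurable_sum)
          fix j assume "j \<in> Itest"
          then have [measurable]: "?S j \<in> borel_measurable M" using SmI by blast
          show "(\<lambda>\<omega>. (of_bool (?S j \<omega> < h \<omega>) :: real)) \<in> borel_measurable M" by measurable
        qed
        show "(\<lambda>\<omega>. (\<Sum>j\<in>Itest. (of_bool (?S j \<omega> \<le> h \<omega>) :: real))) \<in> borel_measurable M"
        proof (rule borel_measurable_sum)
          fix j assume "j \<in> Itest"
          then have [measurable]: "?S j \<in> borel_measurable M" using SmI by blast
          show "(\<lambda>\<omega>. (of_bool (?S j \<omega> \<le> h \<omega>) :: real)) \<in> borel_measurable M" by measurable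
        qed
      qed
      have qDm[measurable]: "(\<lambda>\<omega>. q (D \<omega>)) \<in> borel_measurable M" by measurable
      have G_m: "G \<in> sets M"
      proof -
        have [measurable]: "(\<lambda>\<omega>. (\<Sum>j\<in>Itest. (of_bool (?S j \<omega> < q (D \<omega>)) :: real))) \<in> borel_measurable M"
          by (rule sum_m(1)) measurable
        show ?thesis unfolding G_def by measurable
      qed
      have GN_m: "GN N \<in> sets M" for N
      proof -
        have [measurable]: "(\<lambda>\<omega>. (\<Sum>j\<in>Itest. (of_bool (?S j \<omega> \<le> q (D \<omega>) - 1 / real (Suc N)) :: real))) \<in> borel_measurable M"
          by (rule sum_m(2)) measurable
        show ?thesis unfolding GN_def by measurable
      qed
      have GN_le: "measure M (GN N) \<le> \<delta>" for N
      proof -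
        define qN where "qN d = q d - 1 / real (Suc N)" for d
        have qNm: "qN \<in> borel_measurable TR" unfolding qN_def by measurable
        define E where "E = {\<omega> \<in> space M.
          \<bar>(\<Sum>i\<in>Itest. (of_bool (s (D \<omega>) (X i \<omega>, Y i \<omega>) \<le> qN (D \<omega>)) :: real)) / real ntest
            - P_q_train M MX MY X Y Xs Ys ntrain s qN \<omega>\<bar> \<le> \<epsilon>}"
        have E_ge: "1 - \<delta> \<le> measure M E" unfolding E_def by (rule hyp2'[OF qNm])
        have E_m: "E \<in> sets M"
        proof (rule ccontr)
          assume "E \<notin> sets M"
          then have "measure M E = 0" by (rule measure_notin_sets)
          then show False using E_ge \<delta> by linarith
        qed
        have "AE \<omega> in M. \<omega> \<in> GN N \<longrightarrow> \<omega> \<in> space M - E"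
          using Pq[OF qNm] AE_space
        proof eventually_elim
          case (elim \<omega>)
          show ?case
          proof (intro impI)
            assume "\<omega> \<in> GN N"
            then have cle: "c \<le> (\<Sum>j\<in>Itest. (of_bool (?S j \<omega> \<le> qN (D \<omega>)) :: real))"
              by (simp add: GN_def qN_def)
            have Dsp: "D \<omega> \<in> space TR" using measurable_space[OF Dm] elim by blast
            have "CDF (D \<omega>) (qN (D \<omega>)) < L" unfolding qN_def by (rule q3[OF Dsp]) simp
            have m0: "real ntest > 0" using ntest_ge by simp
            have "\<omega> \<notin> E"
            proof
              assume "\<omega> \<in> E"
              then have "(\<Sum>j\<in>Itest. (of_bool (?S j \<omega> \<le> qN (D \<omega>)) :: real)) / real ntest
                 \<le> P_q_train M MX MY X Y Xs Ys ntrain s qN \<omega> + \<epsilon>" unfolding E_def by auto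
              also have "\<dots> < L + \<epsilon>" using elim \<open>CDF (D \<omega>) (qN (D \<omega>)) < L\<close> by simp
              finally have "(\<Sum>j\<in>Itest. (of_bool (?S j \<omega> \<le> qN (D \<omega>)) :: real)) < real ntest * (L + \<epsilon>)"
                using m0 by (simp add: pos_divide_less_eq mult.commute)
              also have "real ntest * (L + \<epsilon>) = real ntest * (1 - \<alpha>) - 1"
                unfolding L_def using m0 by (simp add: algebra_simps)
              also have "\<dots> \<le> c" unfolding c_def using \<alpha> by (simp add: algebra_simps)
              finally show False using cle by linarith
            qed
            then show "\<omega> \<in> space M - E" using elim by simp
          qed
        qed
        then have "measure M (GN N) \<le> measure M (space M - E)"
          by (rule finite_measure_mono_AE) (use E_m in auto)
        also have "\<dots> = 1 - measure M E" using E_m by (rule prob_compl)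
        finally show ?thesis using E_ge by linarith
      qed
      have G_sub: "G \<subseteq> (\<Union>N. GN N)"
      proof
        fix \<omega> assume "\<omega> \<in> G"
        then have \<omega>: "\<omega> \<in> space M" and cle: "c \<le> (\<Sum>j\<in>Itest. (of_bool (?S j \<omega> < q (D \<omega>)) :: real))"
          by (auto simp: G_def)
        have "\<forall>\<^sub>F N in sequentially. \<forall>j\<in>Itest. ?S j \<omega> < q (D \<omega>) \<longrightarrow> ?S j \<omega> \<le> q (D \<omega>) - 1 / real (Suc N)"
        proof (rule eventually_ball_finite[OF Itest_fin], intro ballI)
          fix j assume "j \<in> Itest"
          show "\<forall>\<^sub>F N in sequentially. ?S j \<omega> < q (D \<omega>) \<longrightarrow> ?S j \<omega> \<le> q (D \<omega>) - 1 / real (Suc N)"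
          proof (cases "?S j \<omega> < q (D \<omega>)")
            case True
            then have "0 < q (D \<omega>) - ?S j \<omega>" by simp
            from order_tendstoD(2)[OF LIMSEQ_inverse_real_of_nat this]
            show ?thesis by eventually_elim (auto simp: inverse_eq_divide)
          qed simp
        qed
        then obtain N where N: "\<forall>j\<in>Itest. ?S j \<omega> < q (D \<omega>) \<longrightarrow> ?S j \<omega> \<le> q (D \<omega>) - 1 / real (Suc N)"
          by (auto simp: eventually_sequentially)
        have "(\<Sum>j\<in>Itest. (of_bool (?S j \<omega> < q (D \<omega>)) :: real))
            \<le> (\<Sum>j\<in>Itest. (of_bool (?S j \<omega> \<le> q (D \<omega>) - 1 / real (Suc N)) :: real))"
          using N by (intro sum_mono) auto
        then have "\<omega> \<in> GN N" using cle \<omega> by (simp add: GN_def)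
        then show "\<omega> \<in> (\<Union>N. GN N)" by blast
      qed
      have GN_inc: "incseq GN"
        unfolding incseq_def
      proof (intro allI impI subsetI)
        fix N N' :: nat and \<omega> assume NN: "N \<le> N'" and w: "\<omega> \<in> GN N"
        have "1 / real (Suc N') \<le> 1 / real (Suc N)" using NN by (simp add: frac_le)
        then have "(\<Sum>j\<in>Itest. (of_bool (?S j \<omega> \<le> q (D \<omega>) - 1 / real (Suc N)) :: real))
            \<le> (\<Sum>j\<in>Itest. (of_bool (?S j \<omega> \<le> q (D \<omega>) - 1 / real (Suc N')) :: real))"
          by (intro sum_mono) auto
        with w show "\<omega> \<in> GN N'" by (auto simp: GN_def)
      qed
      have "(\<lambda>N. measure M (GN N)) \<longlonglongrightarrow> measure M (\<Union>N. GN N)"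
        by (rule finite_Lim_measure_incseq) (use GN_m GN_inc in auto)
      then have "measure M (\<Union>N. GN N) \<le> \<delta>" by (rule LIMSEQ_le_const2) (use GN_le in auto)
      moreover have "measure M G \<le> measure M (\<Union>N. GN N)"
        by (rule finite_measure_mono[OF G_sub]) (use GN_m in auto)
      ultimately have G_le: "measure M G \<le> \<delta>" by linarith
      have AG: "A - G \<subseteq> Succ"
      proof
        fix \<omega> assume w: "\<omega> \<in> A - G"
        then have \<omega>: "\<omega> \<in> space M" and Sq: "?S i \<omega> \<le> q (D \<omega>)"
          and lt: "(\<Sum>j\<in>Itest. (of_bool (?S j \<omega> < q (D \<omega>)) :: real)) < c"
          by (auto simp: A_def G_def)
        have "(\<Sum>j\<in>Itest - {i}. (of_bool (?S j \<omega> < ?S i \<omega>) :: real))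
            \<le> (\<Sum>j\<in>Itest - {i}. (of_bool (?S j \<omega> < q (D \<omega>)) :: real))"
          using Sq by (intro sum_mono) auto
        also have "\<dots> \<le> (\<Sum>j\<in>Itest. (of_bool (?S j \<omega> < q (D \<omega>)) :: real))"
          using Itest_fin by (intro sum_mono2) auto
        finally show "\<omega> \<in> Succ" unfolding Succ_eq using \<omega> lt by simp
      qed
      have "measure M A \<le> measure M ((A - G) \<union> G)" by (rule finite_measure_mono) (use A_m G_m in auto)
      also have "\<dots> \<le> measure M (A - G) + measure M G"
        by (rule measure_subadditive) (use A_m G_m in \<open>auto simp: emeasure_finite\<close>)
      also have "measure M (A - G) \<le> measure M Succ"
        by (rule finite_measure_mono[OF AG Succ_m])
      finally have "measure M A \<le> measure M Succ + \<delta>" using G_le by linarith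
      then show ?thesis using A_ge unfolding Succ_def L_def by linarith
    qed
  qed
  show ?thesis
    using claim1 claim2 unfolding D_def by blast
qed

end
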